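(* In the random order model, algorithm Random achieves an asymptotic approximation ratio of at most $3/4$ for one-sided bipartite matching.
   Context: One-sided bipartite matching: offline vertices are known in advance; online vertices arrive one at a time, each with its set of offline neighbours, and must be irrevocably matched to an unmatched neighbour or left unmatched; the goal is a maximum-size matching. Algorithm Random: when an online vertex arrives, if it has unmatched neighbours, match it to one of them chosen uniformly at random. Random order model (ROM): the adversary chooses the graph, and the arrival order of the online vertices is a uniformly random permutation. The asymptotic approximation ratio of $\mathbb{A}$ in ROM is $\liminf_{n}\inf_{I\in\mathcal{I}_n} \mathbb{E}[v(\mathbb{A},I(\sigma))]/v(I)$, where the expectation is over the uniformly random permutation $\sigma$ of the $n$ data items (and the algorithm's randomness), and $v(I)$ is the maximum matching size. *)

theory Defs
  imports "HOL-Probability.Probability"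
begin

text \<open>An instance with n online vertices (the data items) 0..<n; online vertex u has
  the finite set N u of offline neighbours (offline vertices are natural numbers).
  Only the values N u for u < n matter.\<close>

definition valid_instance :: "nat \<Rightarrow> (nat \<Rightarrow> nat set) \<Rightarrow> bool" where
  "valid_instance n N \<longleftrightarrow> (\<forall>u<n. finite (N u))"

definition is_matching :: "nat \<Rightarrow> (nat \<Rightarrow> nat set) \<Rightarrow> (nat \<times> nat) set \<Rightarrow> bool" where
  "is_matching n N M \<longleftrightarrow>
     (\<forall>(u, v)\<in>M. u < n \<and> v \<in> N u) \<and>
     (\<forall>(u, v)\<in>M. \<forall>(u', v')\<in>M. (u = u' \<or> v = v') \<longrightarrow> (u, v) = (u', v'))"

definition opt_matching :: "nat \<Rightarrow> (nat \<Rightarrow> nat set) \<Rightarrow> nat" where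
  "opt_matching n N = Max (card ` {M. is_matching n N M})"

text \<open>Algorithm Random on arrival sequence us, with set Mt of already matched offline
  vertices: distribution of the number of online vertices it matches.\<close>
fun random_alg :: "(nat \<Rightarrow> nat set) \<Rightarrow> nat list \<Rightarrow> nat set \<Rightarrow> nat pmf" where
  "random_alg N [] Mt = return_pmf 0"
| "random_alg N (u # us) Mt =
     (if N u - Mt = {} then random_alg N us Mt
      else pmf_of_set (N u - Mt) \<bind> (\<lambda>v. map_pmf Suc (random_alg N us (insert v Mt))))"

definition expected_random :: "nat \<Rightarrow> (nat \<Rightarrow> nat set) \<Rightarrow> real" where
  "expected_random n N =
     measure_pmf.expectation
       (pmf_of_set (permutations_of_set {..<n}) \<bind> (\<lambda>\<sigma>. random_alg N \<sigma> {})) real"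

text \<open>Asymptotic approximation ratio of Random in ROM; instances with v(I) = 0 are excluded
  (the ratio E/v(I) is undefined for them).\<close>
definition random_rom_ratio :: ereal where
  "random_rom_ratio =
     liminf (\<lambda>n. INF N \<in> {N. valid_instance n N \<and> opt_matching n N > 0}.
                  ereal (expected_random n N / real (opt_matching n N)))"

end

theory Submission
  imports Defs
begin



abbreviation Exr :: "nat pmf \<Rightarrow> real" where "Exr p \<equiv> measure_pmf.expectation p real"

lemma ra_support: "set_pmf (random_alg N us Mt) \<subseteq> {..length us}"
proof (induction us arbitrary: Mt)
  case Nil then show ?case by simp
next
  case (Cons u us)
  show ?case
  proof (cases "N u - Mt = {}")
    case True then show ?thesis using Cons.IH[of Mt] by auto
  next
    case False
    have "set_pmf (random_alg N (u#us) Mt) = (\<Union>v\<in>set_pmf (pmf_of_set (N u - Mt)). Suc ` set_pmf (random_alg N us (insert v Mt)))"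
      using False by (simp add: set_bind_pmf del: Diff_eq_empty_iff)
    moreover have "\<And>v. set_pmf (random_alg N us (insert v Mt)) \<subseteq> {..length us}" by (rule Cons.IH)
    ultimately show ?thesis by fastforce
  qed
qed

lemma ra_fin: "finite (set_pmf (random_alg N us Mt))"
  by (rule finite_subset[OF ra_support]) simp

lemma Ex_cons_empty: "N u - Mt = {} \<Longrightarrow> Exr (random_alg N (u#xs) Mt) = Exr (random_alg N xs Mt)"
  by simp

lemma Ex_Suc: "Exr (map_pmf Suc p) = 1 + Exr p" if "finite (set_pmf p)"
proof -
  have "Exr (map_pmf Suc p) = measure_pmf.expectation p (\<lambda>x. 1 + real x)"
    by simp
  also have "\<dots> = measure_pmf.expectation p (\<lambda>x. 1) + measure_pmf.expectation p real"
    by (rule Bochner_Integration.integral_add) (auto intro: integrable_measure_pmf_finite that)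
  finally show ?thesis by simp
qed

lemma Ex_Suc2: "finite (set_pmf p) \<Longrightarrow> measure_pmf.expectation p (\<lambda>x. 1 + real x) = 1 + Exr p"
  using Ex_Suc[of p] by simp

lemma Ex_cons: "finite (N u) \<Longrightarrow> N u - Mt \<noteq> {} \<Longrightarrow> Exr (random_alg N (u#xs) Mt) =
   (\<Sum>v\<in>N u - Mt. 1 + Exr (random_alg N xs (insert v Mt))) / card (N u - Mt)"
  apply (subgoal_tac "random_alg N (u#xs) Mt = pmf_of_set (N u - Mt) \<bind> (\<lambda>v. map_pmf Suc (random_alg N xs (insert v Mt)))")
   prefer 2 apply (simp del: Diff_eq_empty_iff)
  apply (erule ssubst)
  apply (subst pmf_expectation_bind_pmf_of_set)
     apply (auto simp: ra_fin)[3]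
  using Ex_Suc2 ra_fin
  apply (simp add: sum_divide_distrib divide_inverse_commute)
  by (simp only: sum_distrib_left)

definition G :: "(nat \<Rightarrow> nat set) \<Rightarrow> nat set \<Rightarrow> nat set \<Rightarrow> real" where
  "G N R Mt = measure_pmf.expectation (pmf_of_set (permutations_of_set R) \<bind> (\<lambda>\<sigma>. random_alg N \<sigma> Mt)) real"

lemma G_alt: "finite R \<Longrightarrow> G N R Mt = (\<Sum>xs\<in>permutations_of_set R. Exr (random_alg N xs Mt)) / card (permutations_of_set R)"
  unfolding G_def
  apply (subst pmf_expectation_bind_pmf_of_set)
  apply (auto simp: ra_fin sum_divide_distrib divide_inverse_commute)
  by (simp only: sum_distrib_left)

lemma G_empty: "G N {} Mt = 0"
  by (simp add: G_alt)

lemma G_step: assumes "finite R" "R \<noteq> {}"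
  shows "G N R Mt = (\<Sum>u\<in>R. (\<Sum>xs\<in>permutations_of_set (R-{u}). Exr (random_alg N (u#xs) Mt))
            / card (permutations_of_set (R-{u}))) / card R"
proof -
  have "pmf_of_set (permutations_of_set R) \<bind> (\<lambda>\<sigma>. random_alg N \<sigma> Mt) =
     pmf_of_set R \<bind> (\<lambda>u. pmf_of_set (permutations_of_set (R-{u})) \<bind> (\<lambda>xs. random_alg N (u#xs) Mt))"
    by (simp add: random_permutation_of_set[OF assms] bind_assoc_pmf bind_return_pmf)
  hence "G N R Mt = measure_pmf.expectation (pmf_of_set R \<bind> (\<lambda>u. pmf_of_set (permutations_of_set (R-{u})) \<bind> (\<lambda>xs. random_alg N (u#xs) Mt))) real"
    by (simp add: G_def)
  also have "\<dots> = (\<Sum>u\<in>R. measure_pmf.expectation (pmf_of_set (permutations_of_set (R-{u})) \<bind> (\<lambda>xs. random_alg N (u#xs) Mt)) real / card R)"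
    apply (subst pmf_expectation_bind_pmf_of_set)
    using assms by (auto simp: set_bind_pmf ra_fin divide_inverse_commute simp del: random_alg.simps)
  also have "\<dots> = (\<Sum>u\<in>R. ((\<Sum>xs\<in>permutations_of_set (R-{u}). Exr (random_alg N (u#xs) Mt))
            / card (permutations_of_set (R-{u}))) / card R)"
    apply (rule sum.cong[OF refl])
    apply (subst pmf_expectation_bind_pmf_of_set)
    using assms apply (auto simp: ra_fin sum_divide_distrib divide_inverse_commute simp del: random_alg.simps)
    by (simp only: sum_distrib_left)
  finally show ?thesis by (simp add: sum_divide_distrib)
qed



definition Psi :: "nat \<Rightarrow> nat \<Rightarrow> nat \<Rightarrow> real" where
  "Psi a b c = real a + real c * (real b + 1) / (real a + real b)"

lemma alg_eq:
  fixes a b c k m :: real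
  assumes "c \<ge> 0"
  shows "(a * ((c*(1 + (a - 1 + (c-1)*k)) + 1 + (a - 1 + c*k))/(c+1))
          + c * (1 + (a + (c-1)*m)) + (b-c) * (a + c*m))
       = a*(a+b) + c + c*(a*c*k/(c+1) + (b-1)*m)"
proof -
  have c1: "c + 1 \<noteq> 0" using assms by simp
  have "(c*(1 + (a - 1 + (c-1)*k)) + 1 + (a - 1 + c*k)) = (c+1)*a + c*c*k" by algebra
  hence "(c*(1 + (a - 1 + (c-1)*k)) + 1 + (a - 1 + c*k))/(c+1) = a + c*c*k/(c+1)"
    using c1 by (simp add: add_divide_distrib)
  hence "(a * ((c*(1 + (a - 1 + (c-1)*k)) + 1 + (a - 1 + c*k))/(c+1))
          + c * (1 + (a + (c-1)*m)) + (b-c) * (a + c*m)) = 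
        a * (a + c*c*k/(c+1)) + c * (1 + (a + (c-1)*m)) + (b-c) * (a + c*m)" by simp
  also have "\<dots> = a*(a+b) + c + c*(a*c*k/(c+1) + (b-1)*m)"
    by (simp add: algebra_simps)
  finally show ?thesis .
qed

lemma alg_core:
  fixes a b c r :: real
  assumes "0 \<le> a" "0 \<le> c" "c \<le> b" "r = a + b" "r \<ge> 2"
  shows "(a * ((c*(1 + (a - 1 + (c-1)*((b+1)/(r-1)))) + 1 + (a - 1 + c*((b+1)/(r-1))))/(c+1))
          + c * (1 + (a + (c-1)*(b/(r-1)))) + (b-c) * (a + c*(b/(r-1)))) / r \<le> a + c*(b+1)/r"
proof -
  have r1: "r - 1 > 0" using assms by simp
  have key: "a*c*((b+1)/(r-1))/(c+1) \<le> a*b/(r-1)" 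
  proof -
    have "(b+1)*c \<le> b*(c+1)" using assms by (simp add: algebra_simps)
    hence "(b+1)*c/(c+1) \<le> b" using assms by (simp add: divide_simps)
    hence "a*((b+1)*c/(c+1)) \<le> a*b" using assms mult_left_mono by blast
    hence "a*((b+1)*c/(c+1))/(r-1) \<le> a*b/(r-1)" by (rule divide_right_mono) (use r1 in auto)
    moreover have "a*c*((b+1)/(r-1))/(c+1) = a*((b+1)*c/(c+1))/(r-1)"
      using r1 assms by (simp add: field_simps)
    ultimately show ?thesis by simp
  qed
  have "(a * ((c*(1 + (a - 1 + (c-1)*((b+1)/(r-1)))) + 1 + (a - 1 + c*((b+1)/(r-1))))/(c+1))
          + c * (1 + (a + (c-1)*(b/(r-1)))) + (b-c) * (a + c*(b/(r-1))))
       = a*(a+b) + c + c*(a*c*((b+1)/(r-1))/(c+1) + (b-1)*(b/(r-1)))"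
    by (rule alg_eq) (use assms in auto)
  also have "\<dots> \<le> a*(a+b) + c + c*(a*b/(r-1) + (b-1)*(b/(r-1)))"
    using key r1 assms by (intro add_left_mono mult_left_mono) auto
  also have "a*b/(r-1) + (b-1)*(b/(r-1)) = b"
  proof -
    have "a*b/(r-1) + (b-1)*(b/(r-1)) = (a*b + (b-1)*b)/(r-1)" by (simp add: add_divide_distrib)
    also have "a*b + (b-1)*b = b*(r-1)" using assms by (simp add: algebra_simps)
    finally show ?thesis using r1 by simp
  qed
  finally have "(a * ((c*(1 + (a - 1 + (c-1)*((b+1)/(r-1)))) + 1 + (a - 1 + c*((b+1)/(r-1))))/(c+1))
          + c * (1 + (a + (c-1)*(b/(r-1)))) + (b-c) * (a + c*(b/(r-1)))) \<le> a*r + c*(b+1)"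
    using assms by (simp add: algebra_simps)
  thus ?thesis using assms by (simp add: divide_simps)
qed

lemma alg_nat:
  fixes a b c :: nat
  assumes "c \<le> b" "0 < a + b"
  shows "(real a * ((real c*(1 + Psi (a-1) b (c-1)) + 1 + Psi (a-1) b c)/(real c+1))
          + real c * (1 + Psi a (b-1) (c-1)) + real (b-c) * Psi a (b-1) c) / real (a+b) \<le> Psi a b c"
proof (cases "a + b = 1")
  case True
  then consider "a = 1" "b = 0" | "a = 0" "b = 1" by linarith
  then show ?thesis
  proof cases
    case 1 with assms show ?thesis by (simp add: Psi_def)
  next
    case 2 with assms have "c = 0 \<or> c = 1" by linarith
    with 2 show ?thesis by (auto simp: Psi_def)
  qed
next
  case False
  define r where "r = real a + real b"
  have r2: "r \<ge> 2" using False assms unfolding r_def by linarith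
  have t1: "real a * ((real c*(1 + Psi (a-1) b (c-1)) + 1 + Psi (a-1) b c)/(real c+1))
      = real a * ((real c*(1 + (real a - 1 + (real c-1)*((real b+1)/(r-1)))) + 1 + (real a - 1 + real c*((real b+1)/(r-1))))/(real c+1))"
  proof (cases "a = 0")
    case True then show ?thesis by simp
  next
    case a: False
    show ?thesis
    proof (cases "c = 0")
      case True with a show ?thesis by (simp add: Psi_def of_nat_diff)
    next
      case False with a show ?thesis by (simp add: Psi_def of_nat_diff r_def algebra_simps)
    qed
  qed
  have t2: "real c * (1 + Psi a (b-1) (c-1)) = real c * (1 + (real a + (real c-1)*(real b/(r-1))))"
  proof (cases "c = 0")
    case True then show ?thesis by simp
  next
    case False then have "b \<ge> 1" using assms by linarith
    with False show ?thesis by (simp add: Psi_def of_nat_diff r_def algebra_simps)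
  qed
  have t3: "real (b-c) * Psi a (b-1) c = (real b - real c) * (real a + real c*(real b/(r-1)))"
  proof (cases "b = c")
    case True then show ?thesis by simp
  next
    case False then have "b \<ge> 1" using assms by linarith
    with assms show ?thesis by (simp add: Psi_def of_nat_diff r_def algebra_simps)
  qed
  have "(real a * ((real c*(1 + Psi (a-1) b (c-1)) + 1 + Psi (a-1) b c)/(real c+1))
          + real c * (1 + Psi a (b-1) (c-1)) + real (b-c) * Psi a (b-1) c) / real (a+b) =
        (real a * ((real c*(1 + (real a - 1 + (real c-1)*((real b+1)/(r-1)))) + 1 + (real a - 1 + real c*((real b+1)/(r-1))))/(real c+1))
          + real c * (1 + (real a + (real c-1)*(real b/(r-1)))) + (real b - real c) * (real a + real c*(real b/(r-1)))) / r"
    unfolding t1 t2 t3 by (simp add: r_def)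
  also have "\<dots> \<le> real a + real c * (real b + 1) / r"
    by (rule alg_core) (use assms r2 in \<open>auto simp: r_def\<close>)
  also have "\<dots> = Psi a b c" by (simp add: Psi_def r_def)
  finally show ?thesis .
qed



lemma Eu_empty: "finite R' \<Longrightarrow> N u - Mt = {} \<Longrightarrow>
  (\<Sum>xs\<in>permutations_of_set R'. Exr (random_alg N (u#xs) Mt)) / card (permutations_of_set R') = G N R' Mt"
proof -
  assume f: "finite R'" and e: "N u - Mt = {}"
  have "\<And>xs. Exr (random_alg N (u#xs) Mt) = Exr (random_alg N xs Mt)" using e by simp
  thus ?thesis using f by (simp add: G_alt)
qed

lemma Eu_ne: assumes "finite R'" "finite (N u)" "N u - Mt \<noteq> {}"
  shows "(\<Sum>xs\<in>permutations_of_set R'. Exr (random_alg N (u#xs) Mt)) / card (permutations_of_set R')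
     = (\<Sum>v\<in>N u - Mt. 1 + G N R' (insert v Mt)) / card (N u - Mt)"
proof -
  define P where "P = permutations_of_set R'"
  define S where "S = N u - Mt"
  have K: "real (card P) > 0" using assms(1) by (simp add: P_def card_permutations_of_set)
  have "(\<Sum>xs\<in>P. Exr (random_alg N (u#xs) Mt)) = (\<Sum>xs\<in>P. (\<Sum>v\<in>S. 1 + Exr (random_alg N xs (insert v Mt))) / card S)"
    using assms by (simp add: Ex_cons S_def del: random_alg.simps)
  also have "\<dots> = (\<Sum>v\<in>S. (\<Sum>xs\<in>P. 1 + Exr (random_alg N xs (insert v Mt)))) / card S"
    by (simp add: sum_divide_distrib[symmetric] sum.swap[of _ P])
  also have "\<dots> = (\<Sum>v\<in>S. card P * (1 + G N R' (insert v Mt))) / card S"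
  proof -
    have "\<And>v. (\<Sum>xs\<in>P. 1 + Exr (random_alg N xs (insert v Mt))) = card P * (1 + G N R' (insert v Mt))"
      using K assms(1) by (simp add: G_alt P_def sum.distrib field_simps)
    thus ?thesis by simp
  qed
  also have "\<dots> = card P * (\<Sum>v\<in>S. 1 + G N R' (insert v Mt)) / card S"
    by (simp add: sum_distrib_left)
  finally have eq: "(\<Sum>xs\<in>P. Exr (random_alg N (u#xs) Mt)) = card P * (\<Sum>v\<in>S. 1 + G N R' (insert v Mt)) / card S" .
  have "(\<Sum>xs\<in>P. Exr (random_alg N (u#xs) Mt)) / card P = (\<Sum>v\<in>S. 1 + G N R' (insert v Mt)) / card S"
  proof -
    have gen: "\<And>k x s::real. k \<noteq> 0 \<Longrightarrow> k*x/s/k = x/s" by simp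
    show ?thesis unfolding eq by (rule gen) (use K in linarith)
  qed
  thus ?thesis unfolding P_def S_def .
qed




definition inst :: "nat \<Rightarrow> nat \<Rightarrow> nat \<Rightarrow> nat set" where
  "inst p q u = (if u < p then {..<q} \<union> {q+u} else if u < p+q then {u-p} else {})"

definition Inv :: "nat \<Rightarrow> nat \<Rightarrow> nat set \<Rightarrow> nat set \<Rightarrow> bool" where
  "Inv p q R Mt \<longleftrightarrow> R \<subseteq> {..<p+q} \<and> (\<forall>i<p. i\<in>R \<longrightarrow> q+i \<notin> Mt) \<and> (\<forall>j<q. p+j \<notin> R \<longrightarrow> j \<in> Mt)"

lemma main:
  "\<forall>R Mt. card R = k \<longrightarrow> Inv p q R Mt \<longrightarrow>
     G (inst p q) R Mt \<le> Psi (card {u\<in>R. u<p}) (card {u\<in>R. p\<le>u}) (card ({..<q} - Mt))"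
proof (induction k)
  case 0
  show ?case
  proof (intro allI impI)
    fix R Mt assume c: "card R = 0" and I: "Inv p q R Mt"
    have "finite R" using I unfolding Inv_def by (meson finite_lessThan finite_subset)
    with c have "R = {}" by simp
    thus "G (inst p q) R Mt \<le> Psi (card {u\<in>R. u<p}) (card {u\<in>R. p\<le>u}) (card ({..<q} - Mt))"
      by (simp add: G_empty Psi_def)
  qed
next
  case (Suc k)
  show ?case
  proof (intro allI impI)
    fix R Mt assume cR: "card R = Suc k" and I: "Inv p q R Mt"
    have Rsub: "R \<subseteq> {..<p+q}" and I1: "\<And>i. i<p \<Longrightarrow> i\<in>R \<Longrightarrow> q+i \<notin> Mt"
      and I2: "\<And>j. j<q \<Longrightarrow> p+j \<notin> R \<Longrightarrow> j \<in> Mt" using I unfolding Inv_def by auto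
    have finR: "finite R" using Rsub by (meson finite_lessThan finite_subset)
    have Rne: "R \<noteq> {}" using cR by auto
    define N where "N = inst p q"
    define F where "F = {..<q} - Mt"
    define RX where "RX = {u\<in>R. u<p}"
    define RY where "RY = {u\<in>R. p\<le>u}"
    define RYf where "RYf = {u\<in>R. p\<le>u \<and> u - p \<notin> Mt}"
    define RYn where "RYn = {u\<in>R. p\<le>u \<and> u - p \<in> Mt}"
    define a where "a = card RX"
    define b where "b = card RY"
    define c where "c = card F"
    have finF: "finite F" by (simp add: F_def)
    have F_R: "\<And>j. j \<in> F \<Longrightarrow> p + j \<in> R" using I2 by (auto simp: F_def)
    have RYf_eq: "RYf = (\<lambda>j. p + j) ` F"
    proof
      show "RYf \<subseteq> (\<lambda>j. p + j) ` F"
      proof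
        fix u assume u: "u \<in> RYf"
        hence "u \<in> R" "p \<le> u" "u - p \<notin> Mt" by (auto simp: RYf_def)
        moreover have "u < p + q" using Rsub \<open>u \<in> R\<close> by auto
        ultimately show "u \<in> (\<lambda>j. p + j) ` F" by (auto simp: F_def image_iff intro!: bexI[of _ "u-p"])
      qed
      show "(\<lambda>j. p + j) ` F \<subseteq> RYf" using F_R by (auto simp: RYf_def F_def)
    qed
    have cYf: "card RYf = c" unfolding RYf_eq c_def by (rule card_image) (simp add: inj_on_def)
    have RY_split: "RY = RYf \<union> RYn" "RYf \<inter> RYn = {}" by (auto simp: RY_def RYf_def RYn_def)
    have finRY: "finite RYf" "finite RYn" using finR by (auto simp: RYf_def RYn_def)
    have cb: "b = c + card RYn" unfolding b_def using RY_split finRY cYf by (simp add: card_Un_disjoint)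
    have cRab: "card R = a + b"
    proof -
      have "R = RX \<union> RY" "RX \<inter> RY = {}" by (auto simp: RX_def RY_def)
      moreover have "finite RX" "finite RY" using finR by (auto simp: RX_def RY_def)
      ultimately show ?thesis unfolding a_def b_def by (simp add: card_Un_disjoint)
    qed
    have cle: "c \<le> b" using cb by simp
    have kab: "k + 1 = a + b" using cR cRab by simp
    have IH: "\<And>R' Mt'. card R' = k \<Longrightarrow> Inv p q R' Mt' \<Longrightarrow>
       G N R' Mt' \<le> Psi (card {u\<in>R'. u<p}) (card {u\<in>R'. p\<le>u}) (card ({..<q} - Mt'))"
      using Suc.IH unfolding N_def by blast
    have cRu: "\<And>u. u \<in> R \<Longrightarrow> card (R - {u}) = k" using cR finR by simp
    have finRu: "\<And>u. finite (R - {u})" using finR by simp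
    define BX where "BX = (real c*(1 + Psi (a-1) b (c-1)) + 1 + Psi (a-1) b c)/(real c+1)"
    define BYf where "BYf = 1 + Psi a (b-1) (c-1)"
    define BYn where "BYn = Psi a (b-1) c"
    define Ef where "Ef u = (\<Sum>xs\<in>permutations_of_set (R-{u}). Exr (random_alg N (u#xs) Mt))
            / card (permutations_of_set (R-{u}))" for u
    define bnd where "bnd u = (if u < p then BX else if u - p \<notin> Mt then BYf else BYn)" for u
    have finN: "\<And>u. finite (N u)" by (simp add: N_def inst_def)
    have bound: "Ef u \<le> bnd u" if uR: "u \<in> R" for u
    proof (cases "u < p")
      case True
      have S: "N u - Mt = insert (q+u) F" using True I1[OF True uR] by (auto simp: N_def inst_def F_def)
      have qF: "q + u \<notin> F" by (simp add: F_def)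
      have Ef_eq: "Ef u = (\<Sum>v\<in>insert (q+u) F. 1 + G N (R-{u}) (insert v Mt)) / card (insert (q+u) F)"
        unfolding Ef_def by (subst Eu_ne[OF finRu finN]) (simp_all add: S)
      have cX: "card {w\<in>R-{u}. w<p} = a - 1"
      proof -
        have "{w\<in>R-{u}. w<p} = RX - {u}" by (auto simp: RX_def)
        thus ?thesis using uR True finR by (simp add: a_def RX_def)
      qed
      have cY: "card {w\<in>R-{u}. p\<le>w} = b"
      proof -
        have "{w\<in>R-{u}. p\<le>w} = RY" using True by (auto simp: RY_def)
        thus ?thesis by (simp add: b_def)
      qed
      have g1: "G N (R-{u}) (insert (q+u) Mt) \<le> Psi (a-1) b c"
      proof -
        have "Inv p q (R-{u}) (insert (q+u) Mt)" using I1 I2 Rsub True by (auto simp: Inv_def)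
        from IH[OF cRu[OF uR] this] have h: "G N (R-{u}) (insert (q+u) Mt) \<le> Psi (card {w\<in>R-{u}. w<p}) (card {w\<in>R-{u}. p\<le>w}) (card ({..<q} - insert (q+u) Mt))" .
        have eqF: "{..<q} - insert (q+u) Mt = F" by (auto simp: F_def)
        show ?thesis using h unfolding cX cY eqF c_def .
      qed
      have g2: "G N (R-{u}) (insert v Mt) \<le> Psi (a-1) b (c-1)" if v: "v \<in> F" for v
      proof -
        have "Inv p q (R-{u}) (insert v Mt)" using I1 I2 Rsub True v by (auto simp: Inv_def F_def)
        from IH[OF cRu[OF uR] this] have h: "G N (R-{u}) (insert v Mt) \<le> Psi (card {w\<in>R-{u}. w<p}) (card {w\<in>R-{u}. p\<le>w}) (card ({..<q} - insert v Mt))" .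
        have e1: "{..<q} - insert v Mt = F - {v}" by (auto simp: F_def)
        have e2: "card (F - {v}) = c - 1" using v finF by (simp add: c_def)
        show ?thesis using h unfolding cX cY e1 e2 .
      qed
      have "(\<Sum>v\<in>insert (q+u) F. 1 + G N (R-{u}) (insert v Mt))
          = (1 + G N (R-{u}) (insert (q+u) Mt)) + (\<Sum>v\<in>F. 1 + G N (R-{u}) (insert v Mt))"
        using finF qF by simp
      also have "\<dots> \<le> (1 + Psi (a-1) b c) + (\<Sum>v\<in>F. 1 + Psi (a-1) b (c-1))"
        using g1 g2 by (intro add_mono sum_mono) auto
      also have "\<dots> = real c*(1 + Psi (a-1) b (c-1)) + 1 + Psi (a-1) b c"
        by (simp add: c_def)
      finally have num: "(\<Sum>v\<in>insert (q+u) F. 1 + G N (R-{u}) (insert v Mt)) \<le> real c*(1 + Psi (a-1) b (c-1)) + 1 + Psi (a-1) b c" .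
      have cS: "real (card (insert (q+u) F)) = real c + 1" using finF qF by (simp add: c_def)
      have "Ef u \<le> BX" unfolding Ef_eq BX_def cS
        by (rule divide_right_mono[OF num]) simp
      thus ?thesis using True by (simp add: bnd_def)
    next
      case False
      define j where "j = u - p"
      have uj: "u = p + j" using False by (simp add: j_def)
      have jq: "j < q" using Rsub uR uj by auto
      have Nu: "N u = {j}" using False uj jq by (simp add: N_def inst_def)
      have cX: "card {w\<in>R-{u}. w<p} = a"
      proof -
        have "{w\<in>R-{u}. w<p} = RX" using False by (auto simp: RX_def)
        thus ?thesis by (simp add: a_def)
      qed
      have cY: "card {w\<in>R-{u}. p\<le>w} = b - 1"
      proof -
        have "{w\<in>R-{u}. p\<le>w} = RY - {u}" by (auto simp: RY_def)
        thus ?thesis using uR False finR by (simp add: b_def RY_def)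
      qed
      show ?thesis
      proof (cases "j \<in> Mt")
        case True
        have "Ef u = G N (R-{u}) Mt" unfolding Ef_def
          by (rule Eu_empty[OF finRu]) (simp add: Nu True)
        also have "\<dots> \<le> Psi a (b-1) c"
        proof -
          have "Inv p q (R-{u}) Mt" using I1 I2 Rsub True uj by (auto simp: Inv_def)
          from IH[OF cRu[OF uR] this] have h: "G N (R-{u}) Mt \<le> Psi (card {w\<in>R-{u}. w<p}) (card {w\<in>R-{u}. p\<le>w}) (card ({..<q} - Mt))" .
          show ?thesis using h unfolding cX cY c_def F_def .
        qed
        finally show ?thesis using False True by (simp add: bnd_def BYn_def j_def)
      next
        case jM: False
        have dj: "N u - Mt = {j}" using Nu jM by auto
        have "Ef u = (\<Sum>v\<in>N u - Mt. 1 + G N (R-{u}) (insert v Mt)) / card (N u - Mt)" unfolding Ef_def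
          by (rule Eu_ne[OF finRu finN]) (simp add: dj)
        also have "\<dots> = 1 + G N (R-{u}) (insert j Mt)" unfolding dj by simp
        also have "\<dots> \<le> 1 + Psi a (b-1) (c-1)"
        proof -
          have "Inv p q (R-{u}) (insert j Mt)" using I1 I2 Rsub jq uj by (auto simp: Inv_def)
          from IH[OF cRu[OF uR] this] have h: "G N (R-{u}) (insert j Mt) \<le> Psi (card {w\<in>R-{u}. w<p}) (card {w\<in>R-{u}. p\<le>w}) (card ({..<q} - insert j Mt))" .
          have e1: "{..<q} - insert j Mt = F - {j}" by (auto simp: F_def)
          have e2: "card (F - {j}) = c - 1" using jM jq finF by (simp add: c_def F_def)
          have "1 + G N (R-{u}) (insert j Mt) \<le> 1 + Psi (card {w\<in>R-{u}. w<p}) (card {w\<in>R-{u}. p\<le>w}) (card ({..<q} - insert j Mt))" using h by simp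
          thus ?thesis unfolding cX cY e1 e2 .
        qed
        finally show ?thesis using False jM by (simp add: bnd_def BYf_def j_def)
      qed
    qed
    have "G N R Mt = (\<Sum>u\<in>R. Ef u) / card R"
      unfolding Ef_def by (rule G_step[OF finR Rne])
    also have "\<dots> \<le> (\<Sum>u\<in>R. bnd u) / card R"
      by (rule divide_right_mono) (auto intro: sum_mono bound)
    also have "(\<Sum>u\<in>R. bnd u) = real a * BX + real c * BYf + real (b - c) * BYn"
    proof -
      have "(\<Sum>u\<in>R. bnd u) = (\<Sum>u\<in>RX. BX) + ((\<Sum>u\<in>RYf. BYf) + (\<Sum>u\<in>RYn. BYn))"
      proof -
        have e1: "R \<inter> {u. u < p} = RX" by (auto simp: RX_def)
        have e2: "R \<inter> - {u. u < p} \<inter> {u. u - p \<notin> Mt} = RYf" by (auto simp: RYf_def)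
        have e3: "R \<inter> - {u. u < p} \<inter> - {u. u - p \<notin> Mt} = RYn" by (auto simp: RYn_def)
        have "(\<Sum>u\<in>R. bnd u) = (\<Sum>u\<in>R \<inter> {u. u < p}. BX) + (\<Sum>u\<in>R \<inter> - {u. u < p}. if u - p \<notin> Mt then BYf else BYn)"
          unfolding bnd_def by (rule sum.If_cases[OF finR])
        also have "(\<Sum>u\<in>R \<inter> - {u. u < p}. if u - p \<notin> Mt then BYf else BYn) = (\<Sum>u\<in>RYf. BYf) + (\<Sum>u\<in>RYn. BYn)"
          by (subst sum.If_cases) (use finR e2 e3 in auto)
        finally show ?thesis using e1 by simp
      qed
      also have "\<dots> = real a * BX + real c * BYf + real (b - c) * BYn"
        using cYf cb by (simp add: a_def)
      finally show ?thesis .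
    qed
    also have "(real a * BX + real c * BYf + real (b - c) * BYn) / real (card R) \<le> Psi a b c"
      unfolding cRab BX_def BYf_def BYn_def by (rule alg_nat[OF cle]) (use kab in linarith)
    finally show "G (inst p q) R Mt \<le> Psi (card {u\<in>R. u<p}) (card {u\<in>R. p\<le>u}) (card ({..<q} - Mt))"
      by (simp add: N_def a_def b_def c_def RX_def RY_def F_def)
  qed
qed




lemma opt_ge:
  fixes p q :: nat
  defines "n \<equiv> p + q"
  shows "opt_matching n (inst p q) \<ge> n"
proof -
  define M where "M = (\<lambda>i. (i, q+i)) ` {..<p} \<union> (\<lambda>j. (p+j, j)) ` {..<q}"
  have mat: "is_matching n (inst p q) M"
    unfolding is_matching_def M_def n_def by (auto simp: inst_def)
  have cM: "card M = n"
  proof -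
    have "card ((\<lambda>i. (i, q+i)) ` {..<p}) = p" by (subst card_image) (auto simp: inj_on_def)
    moreover have "card ((\<lambda>j. (p+j, j)) ` {..<q}) = q" by (subst card_image) (auto simp: inj_on_def)
    moreover have "(\<lambda>i. (i, q+i)) ` {..<p} \<inter> (\<lambda>j. (p+j, j)) ` {..<q} = {}" by auto
    ultimately show ?thesis unfolding M_def n_def by (simp add: card_Un_disjoint)
  qed
  have sub: "{M. is_matching n (inst p q) M} \<subseteq> Pow ({..<n} \<times> {..<q+p})"
  proof
    fix M assume "M \<in> {M. is_matching n (inst p q) M}"
    hence h: "\<And>u v. (u,v) \<in> M \<Longrightarrow> u < n \<and> v \<in> inst p q u" by (auto simp: is_matching_def)
    have "\<And>u v. (u,v) \<in> M \<Longrightarrow> u < n \<and> v < q+p"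
    proof -
      fix u v assume "(u,v) \<in> M"
      from h[OF this] show "u < n \<and> v < q+p" by (auto simp: inst_def n_def split: if_splits)
    qed
    thus "M \<in> Pow ({..<n} \<times> {..<q+p})" by auto
  qed
  have fin: "finite {M. is_matching n (inst p q) M}"
    by (rule finite_subset[OF sub]) simp
  have "card M \<in> card ` {M. is_matching n (inst p q) M}" using mat by auto
  hence "card M \<le> Max (card ` {M. is_matching n (inst p q) M})"
    using fin by (intro Max_ge) auto
  thus ?thesis using cM by (simp add: opt_matching_def)
qed

lemma Psi_bound:
  fixes n :: nat
  assumes "n \<ge> 1"
  shows "Psi (n div 2) (n - n div 2) (n - n div 2) / real n \<le> 3/4 + 2 / real n"
proof -
  define p where "p = n div 2"
  define q where "q = n - n div 2"
  have nq: "n = p + q" by (simp add: p_def q_def)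
  have cases: "q = p \<or> q = p + 1" unfolding p_def q_def by presburger
  have np: "real n > 0" using assms by simp
  have key: "4 * real p * real n + 4 * real q * real q + 4 * real q \<le> 3 * real n * real n + 8 * real n"
    using cases
  proof
    assume "q = p" then show ?thesis unfolding nq by (simp add: algebra_simps)
  next
    assume "q = p + 1" then show ?thesis unfolding nq by (simp add: algebra_simps)
  qed
  have "Psi p q q / real n = (real p * real n + real q * (real q + 1)) / (real n * real n)"
    using np unfolding Psi_def nq by (simp add: field_simps)
  also have "\<dots> \<le> 3/4 + 2 / real n"
  proof -
    have "real n * (4 * real p * real n + 4 * real q * real q + 4 * real q) \<le> real n * (3 * real n * real n + 8 * real n)"
      using key np by (intro mult_left_mono) auto
    thus ?thesis using np by (simp add: field_simps)
  qed
  finally show ?thesis by (simp add: p_def q_def)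
qed

lemma ratio_bound:
  fixes n :: nat
  assumes "n \<ge> 1"
  shows "(INF N \<in> {N. valid_instance n N \<and> opt_matching n N > 0}.
            ereal (expected_random n N / real (opt_matching n N))) \<le> ereal (3/4 + 2 / real n)"
proof -
  define p where "p = n div 2"
  define q where "q = n - n div 2"
  have nq: "p + q = n" by (simp add: p_def q_def)
  define N where "N = inst p q"
  have opt: "opt_matching n N \<ge> n" using opt_ge[of p q] nq by (simp add: N_def)
  have optpos: "opt_matching n N > 0" using opt assms by simp
  have valid: "valid_instance n N" by (simp add: valid_instance_def N_def inst_def)
  have inv: "Inv p q {..<n} {}" using nq by (auto simp: Inv_def)
  have E: "expected_random n N = G N {..<n} {}" by (simp add: expected_random_def G_def)
  have c1: "card {u\<in>{..<n}. u<p} = p"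
  proof -
    have "{u\<in>{..<n}. u<p} = {..<p}" using nq by auto
    thus ?thesis by simp
  qed
  have c2: "card {u\<in>{..<n}. p\<le>u} = q"
  proof -
    have "{u\<in>{..<n}. p\<le>u} = {p..<n}" by auto
    thus ?thesis using nq by simp
  qed
  have h: "G (inst p q) {..<n} {} \<le> Psi (card {u\<in>{..<n}. u<p}) (card {u\<in>{..<n}. p\<le>u}) (card ({..<q} - {}))"
    using main[where p=p and q=q and k=n, rule_format, of "{..<n}" "{}"] inv by simp
  have "G N {..<n} {} \<le> Psi p q q"
    using h unfolding c1 c2 N_def by simp
  hence Ele: "expected_random n N \<le> Psi p q q" using E by simp
  have Psi0: "Psi p q q \<ge> 0" by (simp add: Psi_def)
  have "expected_random n N / real (opt_matching n N) \<le> Psi p q q / real (opt_matching n N)"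
    using Ele optpos by (simp add: divide_right_mono)
  also have "\<dots> \<le> Psi p q q / real n"
    using opt assms Psi0 by (intro divide_left_mono) auto
  also have "\<dots> \<le> 3/4 + 2 / real n" using Psi_bound[OF assms] by (simp add: p_def q_def)
  finally have "ereal (expected_random n N / real (opt_matching n N)) \<le> ereal (3/4 + 2 / real n)" by simp
  moreover have "N \<in> {N. valid_instance n N \<and> opt_matching n N > 0}" using valid optpos by simp
  ultimately show ?thesis by (meson INF_lower order_trans)
qed

theorem theorem9:
  shows "random_rom_ratio \<le> ereal (3 / 4)"
proof -
  have "random_rom_ratio \<le> liminf (\<lambda>n. ereal (3/4 + 2 / real n))"
    unfolding random_rom_ratio_def
    by (rule Liminf_mono) (auto intro: ratio_bound simp: eventually_sequentially intro!: exI[of _ 1])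
  also have "liminf (\<lambda>n. ereal (3/4 + 2 / real n)) = ereal (3/4)"
  proof (rule lim_imp_Liminf)
    show "\<not> trivial_limit (sequentially :: nat filter)" by simp
    have "(\<lambda>n. 3/4 + 2 / real n) \<longlonglongrightarrow> (3/4 + 0 :: real)"
      by (intro tendsto_intros)
    thus "(\<lambda>n. ereal (3/4 + 2 / real n)) \<longlonglongrightarrow> ereal (3/4)" by (intro tendsto_ereal) simp
  qed
  finally show ?thesis .
qed


end
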